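(* Let $\delta,\kappa,a,\alpha>0$ and $\varphi\in(-\pi/2,\pi/2)$; put $d=2\pi\delta$, $\gamma=[-d,d]$, $\Gamma=\kappa\cos\varphi$, $q_0=\dfrac{2\pi\delta\kappa}{\cos\varphi}$. Let $\varepsilon^{(L)}:\gamma\to\mathbb{C}$ be continuous and write $\varepsilon^{(L)}(z)-1=\varepsilon_1(z)\exp[i\varepsilon_2(z)]$ with $\varepsilon_1,\varepsilon_2$ continuous, $\varepsilon_1(z)\ge1$ and $0\le\varepsilon_2(z)<\pi/2$ on $\gamma$; let $E_1=\max_{z\in\gamma}\varepsilon_1(z)=\max_{z\in\gamma}|\varepsilon^{(L)}(z)-1|$. Assume $$0<E_1q_0<1,\qquad \alpha<\alpha_0^{(1)}:=\frac{4}{27}\,\frac{1}{a^2}\,\frac{(1-E_1q_0)^3}{q_0}.$$ Then $P_K^{(1)}(p)=\alpha q_0p^3-(1-E_1q_0)p+a$ has two positive zeros $p_1^{(1)}<p_2^{(1)}$. Let $p\in(p_1^{(1)},p_2^{(1)})$ satisfy $$t_1:=q_0\bigl(E_1+3\alpha p^2\bigr)<1,$$ and assume $0<\alpha<\min\{\alpha_0^{(1)},\alpha_1^{(1)}\}$ with $\alpha_1^{(1)}=\frac13\bigl[q_0(1-E_1q_0)\bigr]^{-1}$. Then the operator $T$ maps $\bar S_p=\{U\in C(\gamma):\|U\|\le p\}$ into itself and $\|T(U)-T(V)\|\le t_1\|U-V\|$ for all $U,V\in\bar S_p$.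
   Context: $C(\gamma)$ is the Banach space of continuous complex-valued functions on $\gamma$ with norm $\|U\|=\max_{z\in\gamma}|U(z)|$. The operator $T:C(\gamma)\to C(\gamma)$ is $$T(U)(z)=a\,e^{-i\Gamma(z-d)}-\frac{i\kappa^2}{2\Gamma}\int_{-d}^{d}e^{i\Gamma|z-z_0|}\Bigl[1-\varepsilon^{(L)}(z_0)-\alpha|U(z_0)|^2\Bigr]U(z_0)\,dz_0,$$ whose fixed points are the solutions of the integral equation $(\ast)$: $U(z)+\frac{i\kappa^2}{2\Gamma}\int_{-d}^{d}e^{i\Gamma|z-z_0|}[1-(\varepsilon^{(L)}(z_0)+\alpha|U(z_0)|^2)]U(z_0)dz_0=a e^{-i\Gamma(z-d)}$, $z\in\gamma$ (here with a complex-valued, i.e. lossy, permittivity $\varepsilon^{(L)}$). *)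

theory Defs
  imports "HOL-Analysis.Analysis"
begin

text \<open>Sup-norm of a function on a set (the norm of C(gamma) when S = gamma is compact
  and U is continuous on S; the supremum is then a maximum).\<close>
definition sup_norm_on :: "real set \<Rightarrow> (real \<Rightarrow> complex) \<Rightarrow> real" where
  "sup_norm_on S U = (SUP z\<in>S. cmod (U z))"

definition opT :: "real \<Rightarrow> real \<Rightarrow> real \<Rightarrow> real \<Rightarrow> real \<Rightarrow> (real \<Rightarrow> complex)
    \<Rightarrow> (real \<Rightarrow> complex) \<Rightarrow> real \<Rightarrow> complex" where
  "opT a \<Gamma> \<kappa> d \<alpha> eps U z =
     complex_of_real a * exp (- \<i> * complex_of_real (\<Gamma> * (z - d)))
     - (\<i> * complex_of_real (\<kappa>\<^sup>2 / (2 * \<Gamma>))) *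
       integral {-d..d} (\<lambda>z0. exp (\<i> * complex_of_real (\<Gamma> * \<bar>z - z0\<bar>))
          * (1 - (eps z0 + complex_of_real (\<alpha> * (cmod (U z0))\<^sup>2))) * U z0)"

end

theory Submission imports Defs begin

lemma cubic_fact:
  fixes A B a p1 p2 p :: real
  assumes "p1 < p2" "A * p1^3 - B * p1 + a = 0" "A * p2^3 - B * p2 + a = 0"
  shows "A * p^3 - B * p + a = A * (p - p1) * (p - p2) * (p + p1 + p2)"
proof -
  have "A * (p2^3 - p1^3) = B * (p2 - p1)" using assms(2,3) by (simp add: algebra_simps)
  moreover have "p2^3 - p1^3 = (p2 - p1) * (p1^2 + p1*p2 + p2^2)" by (simp add: algebra_simps power2_eq_square power3_eq_cube)
  ultimately have "(p2 - p1) * (A * (p1^2 + p1*p2 + p2^2) - B) = 0" by (simp add: algebra_simps)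
  hence hB: "B = A * (p1^2 + p1*p2 + p2^2)" using assms(1) by simp
  have ha: "a = B * p1 - A * p1^3" using assms(2) by simp
  show ?thesis unfolding ha hB by (simp add: algebra_simps power2_eq_square power3_eq_cube)
qed

lemma cubic_unique:
  fixes A B a x y z :: real
  assumes "A > 0" "x > 0" "y > 0" "z > 0" "x \<noteq> y" "x \<noteq> z" "y \<noteq> z"
    "A * x^3 - B * x + a = 0" "A * y^3 - B * y + a = 0" "A * z^3 - B * z + a = 0"
  shows False
proof -
  have e1: "A * (x^2 + x*y + y^2) = B"
  proof -
    have "A * (x^3 - y^3) = B * (x - y)" using assms(8,9) by (simp add: algebra_simps)
    moreover have "x^3 - y^3 = (x - y) * (x^2 + x*y + y^2)" by (simp add: algebra_simps power2_eq_square power3_eq_cube)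
    ultimately have "(x - y) * (A * (x^2 + x*y + y^2) - B) = 0" by (simp add: algebra_simps)
    thus ?thesis using assms(5) by simp
  qed
  have e2: "A * (x^2 + x*z + z^2) = B"
  proof -
    have "A * (x^3 - z^3) = B * (x - z)" using assms(8,10) by (simp add: algebra_simps)
    moreover have "x^3 - z^3 = (x - z) * (x^2 + x*z + z^2)" by (simp add: algebra_simps power2_eq_square power3_eq_cube)
    ultimately have "(x - z) * (A * (x^2 + x*z + z^2) - B) = 0" by (simp add: algebra_simps)
    thus ?thesis using assms(6) by simp
  qed
  have "A * ((y - z) * (x + y + z)) = 0" using e1 e2 by (simp add: algebra_simps power2_eq_square)
  then show False using assms by simp
qed

lemma cubic_exists:
  fixes A B a :: real
  assumes "A > 0" "B > 0" "a > 0" "A * a^2 < 4/27 * B^3"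
  shows "\<exists>p1 p2. 0 < p1 \<and> p1 < p2 \<and> A * p1^3 - B * p1 + a = 0 \<and> A * p2^3 - B * p2 + a = 0"
proof -
  define f where "f = (\<lambda>p::real. A * p^3 - B * p + a)"
  define s where "s = sqrt (B / (3*A))"
  have s0: "s > 0" using assms unfolding s_def by simp
  have s2: "s^2 = B / (3*A)" using assms unfolding s_def by simp
  have As2: "A * s^2 = B/3" using s2 assms by simp
  have fs: "f s = a - 2 * B * s / 3" unfolding f_def using As2
    by (simp add: power3_eq_cube power2_eq_square algebra_simps)
  have "a^2 < (2 * B * s / 3)^2"
  proof -
    have h3: "A * (3 * (B^2 * s^2)) = B^3" using As2 by (simp add: algebra_simps power2_eq_square power3_eq_cube)
    have "A * (27 * ((2 * B * s / 3)^2)) = 4 * (A * (3 * (B^2 * s^2)))" by (simp add: power2_eq_square algebra_simps)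
    also have "\<dots> = 4 * B^3" using h3 by simp
    finally have "A * (27 * a^2) < A * (27 * ((2 * B * s / 3)^2))" using assms(4) by (simp add: algebra_simps)
    hence "27 * a^2 < 27 * ((2 * B * s / 3)^2)" using assms(1) by simp
    thus ?thesis by simp
  qed
  moreover have "0 \<le> 2 * B * s / 3" using assms(2) s0 by simp
  ultimately have "a < 2 * B * s / 3" by (rule power_less_imp_less_base)
  hence fsn: "f s < 0" using fs by simp
  have f0: "f 0 > 0" using assms unfolding f_def by simp
  have f2s: "f (2 * s) > 0"
  proof -
    have "f (2 * s) = 8 * (A * s^2) * s - 2 * B * s + a" unfolding f_def by (simp add: power3_eq_cube power2_eq_square algebra_simps)
    also have "\<dots> = 2 * B * s / 3 + a" using As2 by simp
    moreover have "2 * B * s / 3 > 0" using s0 assms(2) by simp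
    ultimately show ?thesis using assms(3) by simp
  qed
  have cont: "\<And>x. isCont f x" unfolding f_def by (intro continuous_intros)
  obtain x1 where x1: "0 \<le> x1" "x1 \<le> s" "f x1 = 0"
    using IVT2[of f s 0 0] fsn f0 s0 cont by auto
  obtain x2 where x2: "s \<le> x2" "x2 \<le> 2 * s" "f x2 = 0"
    using IVT[of f s 0 "2 * s"] fsn f2s s0 cont by auto
  have "x1 \<noteq> 0" using x1 f0 by auto
  moreover have "x1 \<noteq> s" using x1 fsn by auto
  moreover have "x2 \<noteq> s" using x2 fsn by auto
  ultimately show ?thesis using x1 x2 unfolding f_def by (intro exI[of _ x1] exI[of _ x2]) auto
qed

lemma cube_diff_bound:
  fixes u v :: complex and p :: real
  assumes "cmod u \<le> p" "cmod v \<le> p"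
  shows "cmod (complex_of_real ((cmod u)^2) * u - complex_of_real ((cmod v)^2) * v) \<le> 3 * p^2 * cmod (u - v)"
proof -
  have eq: "complex_of_real ((cmod u)^2) * u - complex_of_real ((cmod v)^2) * v
      = complex_of_real ((cmod u)^2) * (u - v) + complex_of_real ((cmod u - cmod v) * (cmod u + cmod v)) * v"
    by (simp add: algebra_simps power2_eq_square)
  have p0: "0 \<le> p" using assms(1) norm_ge_zero order_trans by blast
  have "cmod (complex_of_real ((cmod u)^2) * (u - v)) = (cmod u)^2 * cmod (u - v)"
    by (simp add: norm_mult norm_power)
  also have "\<dots> \<le> p^2 * cmod (u - v)"
    by (intro mult_right_mono power_mono assms) auto
  finally have t1: "cmod (complex_of_real ((cmod u)^2) * (u - v)) \<le> p^2 * cmod (u - v)" .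
  have "cmod (complex_of_real ((cmod u - cmod v) * (cmod u + cmod v)) * v)
      = \<bar>cmod u - cmod v\<bar> * (cmod u + cmod v) * cmod v" by (simp only: norm_mult norm_of_real abs_mult) simp
  also have "\<dots> \<le> cmod (u - v) * (2*p) * p"
    using assms p0 by (intro mult_mono norm_triangle_ineq3) (auto simp: norm_triangle_ineq3)
  finally have t2: "cmod (complex_of_real ((cmod u - cmod v) * (cmod u + cmod v)) * v) \<le> 2 * p^2 * cmod (u - v)"
    by (simp add: power2_eq_square algebra_simps)
  have "cmod (complex_of_real ((cmod u)^2) * (u - v) + complex_of_real ((cmod u - cmod v) * (cmod u + cmod v)) * v)
     \<le> cmod (complex_of_real ((cmod u)^2) * (u - v)) + cmod (complex_of_real ((cmod u - cmod v) * (cmod u + cmod v)) * v)"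
    by (rule norm_triangle_ineq)
  also have "\<dots> \<le> p^2 * cmod (u - v) + 2 * p^2 * cmod (u - v)" using t1 t2 by (rule add_mono)
  finally show ?thesis unfolding eq by (simp add: algebra_simps)
qed

lemma diff_bound:
  fixes u v e :: complex and p E \<alpha> :: real
  assumes "cmod u \<le> p" "cmod v \<le> p" "cmod (e - 1) \<le> E" "\<alpha> \<ge> 0"
  shows "cmod ((1 - (e + complex_of_real (\<alpha> * (cmod u)^2))) * u - (1 - (e + complex_of_real (\<alpha> * (cmod v)^2))) * v)
    \<le> (E + 3 * \<alpha> * p^2) * cmod (u - v)"
proof -
  have eq: "(1 - (e + complex_of_real (\<alpha> * (cmod u)^2))) * u - (1 - (e + complex_of_real (\<alpha> * (cmod v)^2))) * v
    = - ((e - 1) * (u - v)) - complex_of_real \<alpha> * (complex_of_real ((cmod u)^2) * u - complex_of_real ((cmod v)^2) * v)"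
    by (simp add: algebra_simps)
  have t1: "cmod ((e - 1) * (u - v)) \<le> E * cmod (u - v)" by (simp add: norm_mult mult_right_mono assms)
  have t2: "cmod (complex_of_real \<alpha> * (complex_of_real ((cmod u)^2) * u - complex_of_real ((cmod v)^2) * v)) \<le> \<alpha> * (3 * p^2 * cmod (u - v))"
    using cube_diff_bound[OF assms(1,2)] assms(4) by (simp add: norm_mult mult_left_mono)
  have "cmod (- ((e - 1) * (u - v)) - complex_of_real \<alpha> * (complex_of_real ((cmod u)^2) * u - complex_of_real ((cmod v)^2) * v))
     \<le> cmod (- ((e - 1) * (u - v))) + cmod (complex_of_real \<alpha> * (complex_of_real ((cmod u)^2) * u - complex_of_real ((cmod v)^2) * v))"
    by (rule norm_triangle_ineq4)
  also have "\<dots> \<le> E * cmod (u - v) + \<alpha> * (3 * p^2 * cmod (u - v))"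
    unfolding norm_minus_cancel using t1 t2 by (rule add_mono)
  finally show ?thesis unfolding eq by (simp add: algebra_simps)
qed

lemma self_bound:
  fixes u e :: complex and p E \<alpha> :: real
  assumes "cmod u \<le> p" "cmod (e - 1) \<le> E" "\<alpha> \<ge> 0"
  shows "cmod ((1 - (e + complex_of_real (\<alpha> * (cmod u)^2))) * u) \<le> (E + \<alpha> * p^2) * p"
proof -
  have "cmod (1 - (e + complex_of_real (\<alpha> * (cmod u)^2))) \<le> cmod (e - 1) + cmod (complex_of_real (\<alpha> * (cmod u)^2))"
  proof -
    have "1 - (e + complex_of_real (\<alpha> * (cmod u)^2)) = - ((e - 1) + complex_of_real (\<alpha> * (cmod u)^2))"
      by (simp add: algebra_simps)
    hence "cmod (1 - (e + complex_of_real (\<alpha> * (cmod u)^2))) = cmod ((e - 1) + complex_of_real (\<alpha> * (cmod u)^2))"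
      by (simp only: norm_minus_cancel)
    thus ?thesis by (simp only: norm_triangle_ineq)
  qed
  also have "\<dots> \<le> E + \<alpha> * p^2"
  proof (rule add_mono[OF assms(2)])
    have "(cmod u)^2 \<le> p^2" using assms(1) by (intro power_mono) auto
    hence "\<alpha> * (cmod u)^2 \<le> \<alpha> * p^2" using assms(3) by (rule mult_left_mono)
    moreover have "cmod (complex_of_real (\<alpha> * (cmod u)^2)) = \<alpha> * (cmod u)^2" using assms(3) by (simp only: norm_of_real) (simp add: abs_mult)
    ultimately show "cmod (complex_of_real (\<alpha> * (cmod u)^2)) \<le> \<alpha> * p^2" by simp
  qed
  finally have h: "cmod (1 - (e + complex_of_real (\<alpha> * (cmod u)^2))) \<le> E + \<alpha> * p^2" .
  show ?thesis unfolding norm_mult using h assms(1) by (intro mult_mono) (auto intro: order_trans[OF norm_ge_zero])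
qed

lemma sup_le:
  assumes "S \<noteq> {}" "\<And>z. z \<in> S \<Longrightarrow> cmod (W z) \<le> c"
  shows "sup_norm_on S W \<le> c"
  unfolding sup_norm_on_def using assms by (intro cSUP_least) auto

lemma le_sup:
  assumes "compact S" "continuous_on S W" "z \<in> S"
  shows "cmod (W z) \<le> sup_norm_on S W"
proof -
  have "compact ((\<lambda>z. cmod (W z)) ` S)"
    by (intro compact_continuous_image continuous_intros assms)
  hence "bdd_above ((\<lambda>z. cmod (W z)) ` S)" by (intro bounded_imp_bdd_above compact_imp_bounded)
  thus ?thesis unfolding sup_norm_on_def using assms by (intro cSUP_upper) auto
qed

theorem theorem3:
  fixes \<delta> \<kappa> a \<alpha> \<phi> d \<Gamma> q0 E1 :: real
    and eps :: "real \<Rightarrow> complex" and \<epsilon>1 \<epsilon>2 :: "real \<Rightarrow> real"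
  assumes "\<delta> > 0" "\<kappa> > 0" "a > 0" "\<alpha> > 0"
    and "-(pi/2) < \<phi>" "\<phi> < pi/2"
    and "d = 2 * pi * \<delta>"
    and "\<Gamma> = \<kappa> * cos \<phi>"
    and "q0 = 2 * pi * \<delta> * \<kappa> / cos \<phi>"
    and "continuous_on {-d..d} eps"
    and "continuous_on {-d..d} \<epsilon>1" "continuous_on {-d..d} \<epsilon>2"
    and "\<And>z. z \<in> {-d..d} \<Longrightarrow> eps z - 1 = complex_of_real (\<epsilon>1 z) * exp (\<i> * complex_of_real (\<epsilon>2 z))"
    and "\<And>z. z \<in> {-d..d} \<Longrightarrow> \<epsilon>1 z \<ge> 1"
    and "\<And>z. z \<in> {-d..d} \<Longrightarrow> 0 \<le> \<epsilon>2 z \<and> \<epsilon>2 z < pi/2"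
    and "E1 = (SUP z\<in>{-d..d}. \<epsilon>1 z)"
    and "0 < E1 * q0" "E1 * q0 < 1"
    and "\<alpha> < 4/27 * (1 / a\<^sup>2) * ((1 - E1 * q0)^3 / q0)"
    and "\<alpha> < 1/3 * inverse (q0 * (1 - E1 * q0))"
  shows "(\<exists>p1 p2. 0 < p1 \<and> p1 < p2
            \<and> \<alpha> * q0 * p1^3 - (1 - E1 * q0) * p1 + a = 0
            \<and> \<alpha> * q0 * p2^3 - (1 - E1 * q0) * p2 + a = 0
            \<and> (\<forall>p>0. \<alpha> * q0 * p^3 - (1 - E1 * q0) * p + a = 0 \<longrightarrow> p = p1 \<or> p = p2))
       \<and> (\<forall>p1 p2 p. 0 < p1 \<and> p1 < p2
            \<and> \<alpha> * q0 * p1^3 - (1 - E1 * q0) * p1 + a = 0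
            \<and> \<alpha> * q0 * p2^3 - (1 - E1 * q0) * p2 + a = 0
            \<and> p1 < p \<and> p < p2
            \<and> q0 * (E1 + 3 * \<alpha> * p\<^sup>2) < 1
          \<longrightarrow> (\<forall>U. continuous_on {-d..d} U \<and> sup_norm_on {-d..d} U \<le> p
                 \<longrightarrow> continuous_on {-d..d} (opT a \<Gamma> \<kappa> d \<alpha> eps U)
                     \<and> sup_norm_on {-d..d} (opT a \<Gamma> \<kappa> d \<alpha> eps U) \<le> p)
            \<and> (\<forall>U V. continuous_on {-d..d} U \<and> sup_norm_on {-d..d} U \<le> p
                 \<and> continuous_on {-d..d} V \<and> sup_norm_on {-d..d} V \<le> p
                 \<longrightarrow> sup_norm_on {-d..d} (\<lambda>z. opT a \<Gamma> \<kappa> d \<alpha> eps U z - opT a \<Gamma> \<kappa> d \<alpha> eps V z)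
                     \<le> q0 * (E1 + 3 * \<alpha> * p\<^sup>2) * sup_norm_on {-d..d} (\<lambda>z. U z - V z)))"
proof -
  let ?S = "{-d..d}"
  have cpos: "cos \<phi> > 0" using assms(5,6) by (intro cos_gt_zero_pi) auto
  have d0: "d > 0" using assms(1,7) by simp
  have G0: "\<Gamma> > 0" using assms(2,8) cpos by simp
  have q0pos: "q0 > 0" using assms(1,2,9) cpos by simp
  have cS: "compact ?S" by simp
  have neS: "?S \<noteq> {}" using d0 by simp
  have bddE: "bdd_above (\<epsilon>1 ` ?S)"
    using compact_continuous_image[OF assms(11) cS] by (intro bounded_imp_bdd_above compact_imp_bounded)
  have epsb: "cmod (eps z - 1) \<le> E1" if z: "z \<in> ?S" for z
  proof -
    have "cmod (eps z - 1) = \<epsilon>1 z" using assms(13)[OF z] assms(14)[OF z] by (simp add: norm_mult)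
    also have "\<dots> \<le> E1" unfolding assms(16) using bddE z by (intro cSUP_upper)
    finally show ?thesis .
  qed
  have qc: "\<kappa>^2 / (2*\<Gamma>) * (2*d) = q0" using assms(7,8,9) cpos assms(2)
    by (simp add: field_simps power2_eq_square)
  have Bpos: "1 - E1 * q0 > 0" using assms(18) by simp
  have Apos: "\<alpha> * q0 > 0" using assms(4) q0pos by simp
  have part1: "\<exists>p1 p2. 0 < p1 \<and> p1 < p2
            \<and> \<alpha> * q0 * p1^3 - (1 - E1 * q0) * p1 + a = 0
            \<and> \<alpha> * q0 * p2^3 - (1 - E1 * q0) * p2 + a = 0
            \<and> (\<forall>p>0. \<alpha> * q0 * p^3 - (1 - E1 * q0) * p + a = 0 \<longrightarrow> p = p1 \<or> p = p2)"
  proof -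
    have "\<alpha> * q0 * a^2 < 4/27 * (1 - E1 * q0)^3"
    proof -
      have "\<alpha> * (q0 * a^2) < 4/27 * (1 / a\<^sup>2) * ((1 - E1 * q0)^3 / q0) * (q0 * a^2)"
        using assms(19) q0pos assms(3) by (intro mult_strict_right_mono) auto
      also have "\<dots> = 4/27 * (1 - E1 * q0)^3" using q0pos assms(3) by (simp add: field_simps)
      finally show ?thesis by (simp add: algebra_simps)
    qed
    then obtain p1 p2 where pp: "0 < p1" "p1 < p2" "\<alpha> * q0 * p1^3 - (1 - E1 * q0) * p1 + a = 0"
       "\<alpha> * q0 * p2^3 - (1 - E1 * q0) * p2 + a = 0"
      using cubic_exists[OF Apos Bpos assms(3)] by blast
    have "\<forall>p>0. \<alpha> * q0 * p^3 - (1 - E1 * q0) * p + a = 0 \<longrightarrow> p = p1 \<or> p = p2"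
    proof (intro allI impI)
      fix p assume "p > 0" "\<alpha> * q0 * p^3 - (1 - E1 * q0) * p + a = 0"
      thus "p = p1 \<or> p = p2" using cubic_unique[OF Apos, of p p1 p2 "1 - E1 * q0" a] pp by auto
    qed
    thus ?thesis using pp by blast
  qed
  define g where "g W z z0 = exp (\<i> * complex_of_real (\<Gamma> * \<bar>z - z0\<bar>))
          * (1 - (eps z0 + complex_of_real (\<alpha> * (cmod (W z0))\<^sup>2))) * W z0" for W :: "real \<Rightarrow> complex" and z z0
  define c where "c = \<i> * complex_of_real (\<kappa>\<^sup>2 / (2 * \<Gamma>))"
  have cn: "cmod c = \<kappa>\<^sup>2 / (2 * \<Gamma>)"
  proof -
    have "cmod c = \<bar>\<kappa>\<^sup>2 / (2 * \<Gamma>)\<bar>" unfolding c_def norm_mult norm_ii norm_of_real by simp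
    thus ?thesis using G0 by simp
  qed
  have opT_eq: "opT a \<Gamma> \<kappa> d \<alpha> eps W z = complex_of_real a * exp (- \<i> * complex_of_real (\<Gamma> * (z - d)))
       - c * integral ?S (g W z)" for W z
    unfolding opT_def g_def[abs_def] c_def by simp
  have gcont: "continuous_on (?S \<times> ?S) (\<lambda>x. g W (fst x) (snd x))" if W: "continuous_on ?S W" for W
  proof -
    have e: "continuous_on (?S \<times> ?S) (\<lambda>x. eps (snd x))"
      by (rule continuous_on_compose2[OF assms(10) continuous_on_snd]) auto
    have w: "continuous_on (?S \<times> ?S) (\<lambda>x. W (snd x))"
      by (rule continuous_on_compose2[OF W continuous_on_snd]) auto
    show ?thesis unfolding g_def by (intro continuous_intros e w)
  qed
  have gint: "g W z integrable_on ?S" if W: "continuous_on ?S W" and z: "z \<in> ?S" for W z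
  proof -
    have "continuous_on ?S (\<lambda>z0. g W (fst (z, z0)) (snd (z, z0)))"
      by (rule continuous_on_compose2[OF gcont[OF W]]) (insert z, auto intro!: continuous_intros)
    thus ?thesis by (intro integrable_continuous_interval) simp
  qed
  have opcont: "continuous_on ?S (opT a \<Gamma> \<kappa> d \<alpha> eps W)" if W: "continuous_on ?S W" for W
  proof -
    have "continuous_on ?S (\<lambda>z. integral (cbox (-d) d) (g W z))"
      using integral_continuous_on_param[of ?S "-d" d "\<lambda>z z0. g W z z0"] gcont[OF W]
      by (simp add: case_prod_beta)
    hence "continuous_on ?S (\<lambda>z. integral ?S (g W z))" by simp
    hence "continuous_on ?S (\<lambda>z. complex_of_real a * exp (- \<i> * complex_of_real (\<Gamma> * (z - d)))
       - c * integral ?S (g W z))" by (intro continuous_intros)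
    moreover have "opT a \<Gamma> \<kappa> d \<alpha> eps W = (\<lambda>z. complex_of_real a * exp (- \<i> * complex_of_real (\<Gamma> * (z - d)))
       - c * integral ?S (g W z))" by (rule ext, rule opT_eq)
    ultimately show ?thesis by simp
  qed
  have part2: "(\<forall>U. continuous_on {-d..d} U \<and> sup_norm_on {-d..d} U \<le> p
                 \<longrightarrow> continuous_on {-d..d} (opT a \<Gamma> \<kappa> d \<alpha> eps U)
                     \<and> sup_norm_on {-d..d} (opT a \<Gamma> \<kappa> d \<alpha> eps U) \<le> p)
            \<and> (\<forall>U V. continuous_on {-d..d} U \<and> sup_norm_on {-d..d} U \<le> p
                 \<and> continuous_on {-d..d} V \<and> sup_norm_on {-d..d} V \<le> p
                 \<longrightarrow> sup_norm_on {-d..d} (\<lambda>z. opT a \<Gamma> \<kappa> d \<alpha> eps U z - opT a \<Gamma> \<kappa> d \<alpha> eps V z)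
                     \<le> q0 * (E1 + 3 * \<alpha> * p\<^sup>2) * sup_norm_on {-d..d} (\<lambda>z. U z - V z))"
    if H: "0 < p1" "p1 < p2" "\<alpha> * q0 * p1^3 - (1 - E1 * q0) * p1 + a = 0"
            "\<alpha> * q0 * p2^3 - (1 - E1 * q0) * p2 + a = 0"
            "p1 < p" "p < p2" for p1 p2 p
  proof -
    have p0: "p > 0" using H by simp
    have fp: "\<alpha> * q0 * p^3 - (1 - E1 * q0) * p + a < 0"
    proof -
      have "\<alpha> * q0 * p^3 - (1 - E1 * q0) * p + a = \<alpha> * q0 * (p - p1) * (p - p2) * (p + p1 + p2)"
        by (rule cubic_fact[OF H(2,3,4)])
      also have "\<dots> < 0"
      proof -
        have "\<alpha> * q0 * (p - p1) > 0" using Apos H by simp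
        moreover have "(p - p2) * (p + p1 + p2) < 0" using H by (intro mult_neg_pos) auto
        ultimately show ?thesis by (metis mult.assoc mult_pos_neg)
      qed
      finally show ?thesis .
    qed
    have ptw: "cmod (W z0) \<le> p" if "continuous_on ?S W" "sup_norm_on ?S W \<le> p" "z0 \<in> ?S" for W z0
      using le_sup[OF cS that(1,3)] that(2) by simp
    have gnorm: "g W z z0 = exp (\<i> * complex_of_real (\<Gamma> * \<bar>z - z0\<bar>))
          * ((1 - (eps z0 + complex_of_real (\<alpha> * (cmod (W z0))\<^sup>2))) * W z0)" for W z z0
      unfolding g_def by (simp add: mult.assoc)
    have cont_self: "\<forall>U. continuous_on ?S U \<and> sup_norm_on ?S U \<le> p
                 \<longrightarrow> continuous_on ?S (opT a \<Gamma> \<kappa> d \<alpha> eps U)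
                     \<and> sup_norm_on ?S (opT a \<Gamma> \<kappa> d \<alpha> eps U) \<le> p"
    proof (intro allI impI conjI)
      fix U assume U: "continuous_on ?S U \<and> sup_norm_on ?S U \<le> p"
      show "continuous_on ?S (opT a \<Gamma> \<kappa> d \<alpha> eps U)" using opcont U by simp
      show "sup_norm_on ?S (opT a \<Gamma> \<kappa> d \<alpha> eps U) \<le> p"
      proof (rule sup_le[OF neS])
        fix z assume z: "z \<in> ?S"
        have ib: "cmod (integral ?S (g U z)) \<le> ((E1 + \<alpha> * p^2) * p) * Henstock_Kurzweil_Integration.content ?S"
        proof (rule has_integral_bound_real[where S="{}"])
          show "0 \<le> (E1 + \<alpha> * p^2) * p" using epsb[of d] d0 p0 assms(4)
            by (intro mult_nonneg_nonneg add_nonneg_nonneg) (auto intro: order_trans[OF norm_ge_zero])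
          show "(g U z has_integral integral ?S (g U z)) ?S" using gint U z by blast
          fix z0 assume "z0 \<in> ?S - {}"
          hence z0: "z0 \<in> ?S" by simp
          have up: "cmod (U z0) \<le> p" using ptw U z0 by blast
          have "cmod (g U z z0) = cmod ((1 - (eps z0 + complex_of_real (\<alpha> * (cmod (U z0))\<^sup>2))) * U z0)"
            by (simp only: gnorm norm_mult norm_exp_i_times mult_1_left)
          also have "\<dots> \<le> (E1 + \<alpha> * p^2) * p"
            by (rule self_bound[OF up epsb[OF z0]]) (use assms(4) in simp)
          finally show "cmod (g U z z0) \<le> (E1 + \<alpha> * p^2) * p" .
        qed simp
        have "cmod (opT a \<Gamma> \<kappa> d \<alpha> eps U z) \<le> cmod (complex_of_real a * exp (- \<i> * complex_of_real (\<Gamma> * (z - d))))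
            + cmod (c * integral ?S (g U z))"
          unfolding opT_eq by (rule norm_triangle_ineq4)
        also have "\<dots> = a + \<kappa>\<^sup>2 / (2 * \<Gamma>) * cmod (integral ?S (g U z))"
          using assms(3) by (simp add: norm_mult cn)
        also have "\<dots> \<le> a + \<kappa>\<^sup>2 / (2 * \<Gamma>) * (((E1 + \<alpha> * p^2) * p) * (2 * d))"
          using ib d0 G0 by (intro add_left_mono mult_left_mono) auto
        also have "\<dots> = a + q0 * ((E1 + \<alpha> * p^2) * p)" by (simp only: qc[symmetric]) (simp add: algebra_simps)
        also have "\<dots> \<le> p" using fp by (simp add: algebra_simps power2_eq_square power3_eq_cube)
        finally show "cmod (opT a \<Gamma> \<kappa> d \<alpha> eps U z) \<le> p" .
      qed
    qed
    have lip: "\<forall>U V. continuous_on ?S U \<and> sup_norm_on ?S U \<le> p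
                 \<and> continuous_on ?S V \<and> sup_norm_on ?S V \<le> p
                 \<longrightarrow> sup_norm_on ?S (\<lambda>z. opT a \<Gamma> \<kappa> d \<alpha> eps U z - opT a \<Gamma> \<kappa> d \<alpha> eps V z)
                     \<le> q0 * (E1 + 3 * \<alpha> * p\<^sup>2) * sup_norm_on ?S (\<lambda>z. U z - V z)"
    proof (intro allI impI)
      fix U V assume UV: "continuous_on ?S U \<and> sup_norm_on ?S U \<le> p
                 \<and> continuous_on ?S V \<and> sup_norm_on ?S V \<le> p"
      define M where "M = sup_norm_on ?S (\<lambda>z. U z - V z)"
      have UVc: "continuous_on ?S (\<lambda>z. U z - V z)" using UV by (intro continuous_intros) auto
      have M0: "0 \<le> M" unfolding M_def using le_sup[OF cS UVc, of d] d0 by (auto intro: order_trans[OF norm_ge_zero])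
      have K0: "0 \<le> E1 + 3 * \<alpha> * p^2" using epsb[of d] d0 assms(4)
        by (intro add_nonneg_nonneg) (auto intro: order_trans[OF norm_ge_zero])
      show "sup_norm_on ?S (\<lambda>z. opT a \<Gamma> \<kappa> d \<alpha> eps U z - opT a \<Gamma> \<kappa> d \<alpha> eps V z)
                     \<le> q0 * (E1 + 3 * \<alpha> * p\<^sup>2) * M"
      proof (rule sup_le[OF neS])
        fix z assume z: "z \<in> ?S"
        have ib: "cmod (integral ?S (\<lambda>z0. g U z z0 - g V z z0)) \<le> ((E1 + 3 * \<alpha> * p^2) * M) * Henstock_Kurzweil_Integration.content ?S"
        proof (rule has_integral_bound_real[where S="{}"])
          show "0 \<le> (E1 + 3 * \<alpha> * p^2) * M" using K0 M0 by simp
          show "((\<lambda>z0. g U z z0 - g V z z0) has_integral integral ?S (\<lambda>z0. g U z z0 - g V z z0)) ?S"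
            using gint UV z by (intro integrable_integral integrable_diff) auto
          fix z0 assume "z0 \<in> ?S - {}"
          hence z0: "z0 \<in> ?S" by simp
          have "cmod (g U z z0 - g V z z0) = cmod ((1 - (eps z0 + complex_of_real (\<alpha> * (cmod (U z0))\<^sup>2))) * U z0
               - (1 - (eps z0 + complex_of_real (\<alpha> * (cmod (V z0))\<^sup>2))) * V z0)"
          proof -
            have "g U z z0 - g V z z0 = exp (\<i> * complex_of_real (\<Gamma> * \<bar>z - z0\<bar>)) *
               ((1 - (eps z0 + complex_of_real (\<alpha> * (cmod (U z0))\<^sup>2))) * U z0
               - (1 - (eps z0 + complex_of_real (\<alpha> * (cmod (V z0))\<^sup>2))) * V z0)"
              unfolding gnorm by (simp only: right_diff_distrib)
            thus ?thesis by (simp only: norm_mult norm_exp_i_times mult_1_left)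
          qed
          also have "\<dots> \<le> (E1 + 3 * \<alpha> * p^2) * cmod (U z0 - V z0)"
            using UV z0 assms(4) ptw[of U z0] ptw[of V z0] epsb[OF z0] by (intro diff_bound) auto
          also have "\<dots> \<le> (E1 + 3 * \<alpha> * p^2) * M"
            unfolding M_def using le_sup[OF cS UVc z0] K0 by (intro mult_left_mono) auto
          finally show "cmod (g U z z0 - g V z z0) \<le> (E1 + 3 * \<alpha> * p^2) * M" .
        qed simp
        have "opT a \<Gamma> \<kappa> d \<alpha> eps U z - opT a \<Gamma> \<kappa> d \<alpha> eps V z
            = - (c * integral ?S (\<lambda>z0. g U z z0 - g V z z0))"
        proof -
          have I: "integral ?S (\<lambda>z0. g U z z0 - g V z z0) = integral ?S (g U z) - integral ?S (g V z)"
            using UV z by (intro integral_diff gint) auto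
          show ?thesis unfolding opT_eq I by (simp add: algebra_simps)
        qed
        hence "cmod (opT a \<Gamma> \<kappa> d \<alpha> eps U z - opT a \<Gamma> \<kappa> d \<alpha> eps V z)
            = \<kappa>\<^sup>2 / (2 * \<Gamma>) * cmod (integral ?S (\<lambda>z0. g U z z0 - g V z z0))"
          by (simp add: norm_mult cn)
        also have "\<dots> \<le> \<kappa>\<^sup>2 / (2 * \<Gamma>) * (((E1 + 3 * \<alpha> * p^2) * M) * (2 * d))"
          using ib d0 G0 by (intro mult_left_mono) auto
        also have "\<dots> = q0 * (E1 + 3 * \<alpha> * p\<^sup>2) * M" by (simp only: qc[symmetric]) (simp add: algebra_simps)
        finally show "cmod (opT a \<Gamma> \<kappa> d \<alpha> eps U z - opT a \<Gamma> \<kappa> d \<alpha> eps V z) \<le> q0 * (E1 + 3 * \<alpha> * p\<^sup>2) * M" .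
      qed
    qed
    show ?thesis using cont_self lip by blast
  qed
  show ?thesis
    apply (intro conjI[OF part1] allI impI)
    apply (elim conjE)
    apply (rule part2)
    apply assumption+
    done
qed

end
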